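(* Let $A\in\mathbb Z^{d\times n}$ with $\ker(A)\cap\mathbb N^n=\{0\}$. Then $S(A)\subseteq D(A)\subseteq D^w(A)\subseteq G(A)$.
   Context: For $z\in\mathbb Z^n$, $z^\pm\in\mathbb N^n$ are the unique vectors with disjoint supports and $z=z^+-z^-$; $\|\cdot\|$ is the $1$-norm; $\le$ is coordinatewise. For $z\in\ker(A)$ and $u,v\in\ker(A)\setminus\{0\}$ with $z=u+v$: it is a proper conformal decomposition if $z^+=u^++v^+$ and $z^-=u^-+v^-$; a proper semi-conformal decomposition if for every $i$, $u_i>0$ implies $v_i\ge0$; a positive (resp. negative) distance decomposition if $u^+\le z^+$ (resp. $u^-\le z^-$) and $\|v\|<\|z\|$. $S(A)$ is the set of nonzero $z\in\ker(A)$ with no proper semi-conformal decomposition; $G(A)$ the set of nonzero $z\in\ker(A)$ with no proper conformal decomposition; $D^+(A)$ (resp. $D^-(A)$) the set of nonzero $z\in\ker(A)$ with no positive (resp. negative) distance decomposition; $D(A)=D^+(A)\cap D^-(A)$ and $D^w(A)=D^+(A)\cup D^-(A)$. *)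

theory Defs
  imports "HOL-Analysis.Analysis"
begin

definition posp :: "int^'n \<Rightarrow> int^'n" where
  "posp z = (\<chi> i. max (z $ i) 0)"

definition negp :: "int^'n \<Rightarrow> int^'n" where
  "negp z = (\<chi> i. max (- (z $ i)) 0)"

definition norm1 :: "int^'n \<Rightarrow> int" where
  "norm1 z = (\<Sum>i\<in>UNIV. \<bar>z $ i\<bar>)"

definition kerA :: "int^'n^'d \<Rightarrow> (int^'n) set" where
  "kerA A = {z. A *v z = 0}"

definition conformal_dec :: "int^'n \<Rightarrow> int^'n \<Rightarrow> int^'n \<Rightarrow> bool" where
  "conformal_dec z u v \<longleftrightarrow> posp z = posp u + posp v \<and> negp z = negp u + negp v"

definition semiconformal_dec :: "int^'n \<Rightarrow> int^'n \<Rightarrow> bool" where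
  "semiconformal_dec u v \<longleftrightarrow> (\<forall>i. u $ i > 0 \<longrightarrow> v $ i \<ge> 0)"

definition posdist_dec :: "int^'n \<Rightarrow> int^'n \<Rightarrow> int^'n \<Rightarrow> bool" where
  "posdist_dec z u v \<longleftrightarrow> posp u \<le> posp z \<and> norm1 v < norm1 z"

definition negdist_dec :: "int^'n \<Rightarrow> int^'n \<Rightarrow> int^'n \<Rightarrow> bool" where
  "negdist_dec z u v \<longleftrightarrow> negp u \<le> negp z \<and> norm1 v < norm1 z"

definition no_dec :: "int^'n^'d \<Rightarrow> (int^'n \<Rightarrow> int^'n \<Rightarrow> int^'n \<Rightarrow> bool) \<Rightarrow> (int^'n) set" where
  "no_dec A P = {z \<in> kerA A. z \<noteq> 0 \<and>
     \<not> (\<exists>u v. u \<in> kerA A \<and> v \<in> kerA A \<and> u \<noteq> 0 \<and> v \<noteq> 0 \<and> z = u + v \<and> P z u v)}"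

definition Sset :: "int^'n^'d \<Rightarrow> (int^'n) set" where
  "Sset A = no_dec A (\<lambda>z u v. semiconformal_dec u v)"

definition Gset :: "int^'n^'d \<Rightarrow> (int^'n) set" where
  "Gset A = no_dec A conformal_dec"

definition Dplus :: "int^'n^'d \<Rightarrow> (int^'n) set" where
  "Dplus A = no_dec A posdist_dec"

definition Dminus :: "int^'n^'d \<Rightarrow> (int^'n) set" where
  "Dminus A = no_dec A negdist_dec"

definition Dset :: "int^'n^'d \<Rightarrow> (int^'n) set" where
  "Dset A = Dplus A \<inter> Dminus A"

definition Dw :: "int^'n^'d \<Rightarrow> (int^'n) set" where
  "Dw A = Dplus A \<union> Dminus A"

end

theory Submission
  imports Defs
begin

lemma abs_split: "\<bar>x::int\<bar> = max x 0 + max (-x) 0" by auto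

lemma conf_norm:
  assumes "conformal_dec z u v"
  shows "norm1 z = norm1 u + norm1 v"
proof -
  have "\<And>i. \<bar>z$i\<bar> = \<bar>u$i\<bar> + \<bar>v$i\<bar>"
  proof -
    fix i
    have "posp z $ i = posp u $ i + posp v $ i" "negp z $ i = negp u $ i + negp v $ i"
      using assms unfolding conformal_dec_def by auto
    then show "\<bar>z$i\<bar> = \<bar>u$i\<bar> + \<bar>v$i\<bar>"
      unfolding posp_def negp_def by (simp add: abs_split[of "z$i"] abs_split[of "u$i"] abs_split[of "v$i"])
  qed
  then show ?thesis unfolding norm1_def by (simp add: sum.distrib)
qed

lemma norm1_pos:
  assumes "u \<noteq> 0" shows "norm1 u > 0"
proof -
  obtain i where "u $ i \<noteq> 0" using assms by (metis vec_eq_iff zero_index)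
  then have "0 < \<bar>u$i\<bar>" by simp
  also have "\<bar>u$i\<bar> \<le> norm1 u" unfolding norm1_def
    by (rule member_le_sum) auto
  finally show ?thesis .
qed

theorem proposition8p6:
  fixes A :: "int^'n^'d"
  assumes "\<forall>z \<in> kerA A. (\<forall>i. z $ i \<ge> 0) \<longrightarrow> z = 0"
  shows "Sset A \<subseteq> Dset A \<and> Dset A \<subseteq> Dw A \<and> Dw A \<subseteq> Gset A"
proof (intro conjI)
  show "Sset A \<subseteq> Dset A"
  proof
    fix z assume z: "z \<in> Sset A"
    have "z \<in> Dplus A"
      unfolding Dplus_def no_dec_def
    proof (safe)
      show "z \<in> kerA A" "z = 0 \<Longrightarrow> False" using z unfolding Sset_def no_dec_def by auto
    next
      fix u v assume h: "u \<in> kerA A" "v \<in> kerA A" "u \<noteq> 0" "v \<noteq> 0" "z = u + v" "posdist_dec (u + v) u v"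
      have "semiconformal_dec u v" unfolding semiconformal_dec_def
      proof (intro allI impI)
        fix i assume "u $ i > 0"
        moreover have "posp u $ i \<le> posp z $ i" using h(5,6) unfolding posdist_dec_def less_eq_vec_def by auto
        ultimately show "v $ i \<ge> 0" using h(5) unfolding posp_def by auto
      qed
      then show False using z h unfolding Sset_def no_dec_def by blast
    qed
    moreover have "z \<in> Dminus A"
      unfolding Dminus_def no_dec_def
    proof (safe)
      show "z \<in> kerA A" "z = 0 \<Longrightarrow> False" using z unfolding Sset_def no_dec_def by auto
    next
      fix u v assume h: "u \<in> kerA A" "v \<in> kerA A" "u \<noteq> 0" "v \<noteq> 0" "z = u + v" "negdist_dec (u + v) u v"
      have "semiconformal_dec v u" unfolding semiconformal_dec_def
      proof (intro allI impI)
        fix i assume "v $ i > 0"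
        moreover have "negp u $ i \<le> negp z $ i" using h(5,6) unfolding negdist_dec_def less_eq_vec_def by auto
        ultimately show "u $ i \<ge> 0" using h(5) unfolding negp_def by auto
      qed
      moreover have "z = v + u" using h(5) by (simp add: add.commute)
      ultimately show False using z h unfolding Sset_def no_dec_def by blast
    qed
    ultimately show "z \<in> Dset A" unfolding Dset_def by blast
  qed
next
  show "Dset A \<subseteq> Dw A" unfolding Dset_def Dw_def by blast
next
  show "Dw A \<subseteq> Gset A"
  proof
    fix z assume z: "z \<in> Dw A"
    show "z \<in> Gset A" unfolding Gset_def no_dec_def
    proof (safe)
      show "z \<in> kerA A" "z = 0 \<Longrightarrow> False" using z unfolding Dw_def Dplus_def Dminus_def no_dec_def by auto
    next
      fix u v assume h: "u \<in> kerA A" "v \<in> kerA A" "u \<noteq> 0" "v \<noteq> 0" "z = u + v" "conformal_dec (u + v) u v"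
      have n: "norm1 v < norm1 z" using conf_norm[OF h(6)] norm1_pos[OF h(3)] h(5) by simp
      have "posp u \<le> posp z" "negp u \<le> negp z" using h(5,6)
        unfolding conformal_dec_def less_eq_vec_def posp_def negp_def
        by (auto simp: vec_eq_iff)
      then have "posdist_dec z u v" "negdist_dec z u v"
        using n unfolding posdist_dec_def negdist_dec_def by auto
      then show False using z h unfolding Dw_def Dplus_def Dminus_def no_dec_def by blast
    qed
  qed
qed

end
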